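(* The allocation rule of the Uniform Price Auction is monotone: for every agent $i$, every profile of the other agents' values $v_{-i}$, and fixed budgets, the map $v_i\mapsto x_i(v_i,v_{-i})$ is non-decreasing.
   Context: Uniform Price Auction: one unit of a divisible good, $n$ agents with values per unit $v_i>0$ and publicly known budgets $B_i>0$. Relabel agents so that $v_1\ge\dots\ge v_n$ and set $v_{n+1}=0$. Let $k\in\{0,\dots,n\}$ be the largest integer with $\sum_{j=1}^kB_j\le v_k$ (the empty sum is $0$, and $k=0$ is always admissible). Case I: if $\sum_{j=1}^kB_j>v_{k+1}$, allocate $x_i=B_i/\sum_{j=1}^kB_j$ for $i\le k$ and $0$ to everyone else. Case II: if $\sum_{j=1}^kB_j\le v_{k+1}$, allocate $x_i=B_i/v_{k+1}$ for $i\le k$, $x_{k+1}=1-\sum_{j=1}^kx_j$, and $0$ to everyone else. Payments are given by Myerson's formula $\pi_i(v)=v_ix_i(v)-\int_0^{v_i}x_i(u,v_{-i})\,du$. *)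

theory Defs
  imports Complex_Main
begin

text \<open>Agents are 0, ..., n-1; v j is the value per unit, B j the budget of agent j.
  Ranks are 1, ..., n, matching the paper's relabelling v_1 >= ... >= v_n.\<close>

definition upa_rank :: "nat \<Rightarrow> (nat \<Rightarrow> real) \<Rightarrow> nat \<Rightarrow> nat" where
  "upa_rank n v i = card {j. j < n \<and> (v j > v i \<or> (v j = v i \<and> j < i))} + 1"

definition upa_agent :: "nat \<Rightarrow> (nat \<Rightarrow> real) \<Rightarrow> nat \<Rightarrow> nat" where
  "upa_agent n v p = (THE i. i < n \<and> upa_rank n v i = p)"

definition upa_sval :: "nat \<Rightarrow> (nat \<Rightarrow> real) \<Rightarrow> nat \<Rightarrow> real" where
  "upa_sval n v p = (if 1 \<le> p \<and> p \<le> n then v (upa_agent n v p) else 0)"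

definition upa_cumB :: "nat \<Rightarrow> (nat \<Rightarrow> real) \<Rightarrow> (nat \<Rightarrow> real) \<Rightarrow> nat \<Rightarrow> real" where
  "upa_cumB n v B k = (\<Sum>j\<in>{j. j < n \<and> upa_rank n v j \<le> k}. B j)"

definition upa_k :: "nat \<Rightarrow> (nat \<Rightarrow> real) \<Rightarrow> (nat \<Rightarrow> real) \<Rightarrow> nat" where
  "upa_k n v B = Max {k. k \<le> n \<and> (k = 0 \<or> upa_cumB n v B k \<le> upa_sval n v k)}"

definition upa_alloc :: "nat \<Rightarrow> (nat \<Rightarrow> real) \<Rightarrow> (nat \<Rightarrow> real) \<Rightarrow> nat \<Rightarrow> real" where
  "upa_alloc n v B i =
    (let k = upa_k n v B; S = upa_cumB n v B k; r = upa_rank n v i; w = upa_sval n v (k + 1) in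
     if n \<le> i then 0
     else if S > w then (if r \<le> k then B i / S else 0)
     else (if r \<le> k then B i / w
           else if r = k + 1 then 1 - (\<Sum>j\<in>{j. j < n \<and> upa_rank n v j \<le> k}. B j / w)
           else 0))"

end

theory Submission
  imports Defs
begin

locale prof =
  fixes n :: nat and v B :: "nat \<Rightarrow> real"
  assumes vpos: "\<forall>j<n. v j > 0" and Bpos: "\<forall>j<n. B j > 0"
begin

abbreviation prec :: "nat \<Rightarrow> nat \<Rightarrow> bool" where
  "prec j l \<equiv> v j > v l \<or> (v j = v l \<and> j < l)"
abbreviation r where "r \<equiv> upa_rank n v"
abbreviation P where "P j \<equiv> {l. l < n \<and> prec l j}"
abbreviation T where "T k \<equiv> {j. j < n \<and> r j \<le> k}"
abbreviation kk where "kk \<equiv> upa_k n v B"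
abbreviation sv where "sv \<equiv> upa_sval n v"
abbreviation cum where "cum \<equiv> upa_cumB n v B"
abbreviation adm where "adm k \<equiv> k = 0 \<or> cum k \<le> sv k"
abbreviation price where "price \<equiv> max (cum kk) (sv (kk+1))"

lemma rank_eq: "r j = card (P j) + 1"
  by (simp add: upa_rank_def)

lemma rank_less: assumes "j < n" "prec j l" shows "r j < r l"
proof -
  have "P j \<subset> P l"
  proof
    show "P j \<subseteq> P l" using assms(2) by auto
    show "P j \<noteq> P l" using assms by auto
  qed
  then have "card (P j) < card (P l)" by (intro psubset_card_mono) auto
  then show ?thesis by (simp add: rank_eq)
qed

lemma rank_less_iff: assumes "j < n" "l < n" shows "r j < r l \<longleftrightarrow> prec j l"
proof
  assume h: "r j < r l"
  show "prec j l"
  proof (rule ccontr)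
    assume "\<not> prec j l"
    then have "j = l \<or> prec l j" by auto
    then show False using h rank_less[OF assms(2), of j] by auto
  qed
qed (use rank_less assms in auto)

lemma rank_inj: assumes "j < n" "l < n" "r j = r l" shows "j = l"
proof (rule ccontr)
  assume "j \<noteq> l"
  then have "prec j l \<or> prec l j" by auto
  then show False using rank_less assms by fastforce
qed

lemma rank_range: assumes "j < n" shows "1 \<le> r j \<and> r j \<le> n"
proof -
  have "P j \<subseteq> {..<n} - {j}" by auto
  then have "card (P j) \<le> card ({..<n} - {j})" by (intro card_mono) auto
  also have "\<dots> = n - 1" using assms by simp
  finally show ?thesis using assms by (simp add: rank_eq)
qed

lemma rank_surj: assumes "1 \<le> p" "p \<le> n" shows "\<exists>j<n. r j = p"
proof -
  have inj: "inj_on r {..<n}" using rank_inj by (auto simp: inj_on_def)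
  have sub: "r ` {..<n} \<subseteq> {1..n}" using rank_range by auto
  have "card (r ` {..<n}) = n" using card_image[OF inj] by simp
  then have "r ` {..<n} = {1..n}" using sub by (intro card_subset_eq) auto
  then have "p \<in> r ` {..<n}" using assms by auto
  then show ?thesis by auto
qed

lemma agent: assumes "1 \<le> p" "p \<le> n"
  shows "upa_agent n v p < n \<and> r (upa_agent n v p) = p"
proof -
  have "\<exists>!j. j < n \<and> r j = p" using rank_surj[OF assms] rank_inj by blast
  then show ?thesis unfolding upa_agent_def by (rule theI')
qed

lemma sv_rank: assumes "j < n" shows "sv (r j) = v j"
proof -
  have "upa_agent n v (r j) = j"
    using agent[of "r j"] rank_range[OF assms] rank_inj[OF _ assms] by auto
  then show ?thesis using rank_range[OF assms] by (simp add: upa_sval_def)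
qed

lemma sv_ge: assumes "j < n" "r j \<le> p" "p \<le> n" shows "sv p \<le> v j"
proof -
  define g where "g = upa_agent n v p"
  have g: "g < n" "r g = p" using agent[of p] rank_range[OF assms(1)] assms g_def by auto
  have "j = g \<or> prec j g" using rank_less_iff[OF assms(1) g(1)] assms g by (cases "r j = r g") (auto dest: rank_inj)
  then have "v g \<le> v j" by auto
  then show ?thesis using g assms rank_range[OF assms(1)] by (auto simp: upa_sval_def g_def)
qed

lemma sv_le: assumes "j < n" "1 \<le> p" "p \<le> r j" shows "v j \<le> sv p"
proof -
  have pn: "p \<le> n" using rank_range[OF assms(1)] assms by auto
  define g where "g = upa_agent n v p"
  have g: "g < n" "r g = p" using agent[of p] pn assms g_def by auto
  have "j = g \<or> prec g j" using rank_less_iff[OF g(1) assms(1)] assms g by (cases "r j = r g") (auto dest: rank_inj)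
  then have "v j \<le> v g" by auto
  then show ?thesis using g assms pn by (auto simp: upa_sval_def g_def)
qed

lemma sumB_mono: assumes "X \<subseteq> Y" "Y \<subseteq> {j. j < n}" shows "sum B X \<le> sum B Y"
proof -
  have "finite Y" using assms(2) finite_subset by (metis finite_Collect_less_nat)
  then show ?thesis using assms Bpos by (intro sum_mono2) (auto intro: less_imp_le)
qed

lemma cum_eq: "cum k = sum B (T k)" by (simp add: upa_cumB_def)

lemma cum_mono: "k \<le> k' \<Longrightarrow> cum k \<le> cum k'"
  unfolding cum_eq by (rule sumB_mono) auto

lemma T_rank: assumes "j < n" shows "T (r j - 1) = P j" "T (r j) = insert j (P j)"
proof -
  have r1: "1 \<le> r j" using rank_range[OF assms] by auto
  have e1: "x < n \<Longrightarrow> (r x \<le> r j - 1 \<longleftrightarrow> prec x j)" for x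
    using rank_less_iff[OF _ assms, of x] r1 by linarith
  show "T (r j - 1) = P j" using e1 by auto
  have e2: "x < n \<Longrightarrow> (r x \<le> r j \<longleftrightarrow> prec x j \<or> x = j)" for x
  proof -
    assume x: "x < n"
    have "r x \<le> r j \<longleftrightarrow> r x < r j \<or> r x = r j" by linarith
    also have "\<dots> \<longleftrightarrow> prec x j \<or> x = j" using rank_less_iff[OF x assms] rank_inj[OF x assms] by auto
    finally show ?thesis .
  qed
  show "T (r j) = insert j (P j)" using e2 assms by auto
qed

lemma cum_rank: assumes "j < n"
  shows "cum (r j - 1) = sum B (P j)" "cum (r j) = sum B (P j) + B j"
proof -
  show "cum (r j - 1) = sum B (P j)" using T_rank[OF assms] by (simp add: cum_eq)
  have "finite (P j)" by auto
  moreover have "j \<notin> P j" by auto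
  ultimately show "cum (r j) = sum B (P j) + B j"
    using T_rank[OF assms] by (simp add: cum_eq add.commute)
qed


lemma kk_props: "kk \<le> n" "adm kk" "k \<le> n \<Longrightarrow> adm k \<Longrightarrow> k \<le> kk"
proof -
  let ?S = "{k. k \<le> n \<and> (k = 0 \<or> cum k \<le> sv k)}"
  have fin: "finite ?S" by (rule finite_subset[of _ "{..n}"]) auto
  have ne: "?S \<noteq> {}" by auto
  have "kk \<in> ?S" unfolding upa_k_def using Max_in[OF fin ne] .
  then show "kk \<le> n" "adm kk" by auto
  show "k \<le> n \<Longrightarrow> adm k \<Longrightarrow> k \<le> kk" unfolding upa_k_def using Max_ge[OF fin] by auto
qed

lemma adm_down: assumes "adm k" "k \<le> n" "k' \<le> k" shows "adm k'"
proof (cases "k' = 0")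
  case False
  then have k: "k \<noteq> 0" "1 \<le> k'" using assms by auto
  define g where "g = upa_agent n v k"
  have g: "g < n" "r g = k" using agent[of k] k assms g_def by auto
  have "sv k = v g" using sv_rank[OF g(1)] g by simp
  also have "\<dots> \<le> sv k'" using sv_le[OF g(1) k(2)] g assms by auto
  finally have "sv k \<le> sv k'" .
  moreover have "cum k' \<le> cum k" using cum_mono assms by auto
  ultimately show ?thesis using assms k by auto
qed simp

lemma inT_iff: assumes "i < n" shows "r i \<le> kk \<longleftrightarrow> cum (r i) \<le> v i"
proof
  assume "r i \<le> kk"
  then have "adm (r i)" using adm_down kk_props by blast
  then show "cum (r i) \<le> v i" using rank_range[OF assms] sv_rank[OF assms] by auto
next
  assume "cum (r i) \<le> v i"
  then show "r i \<le> kk" using kk_props(3)[of "r i"] rank_range[OF assms] sv_rank[OF assms] by auto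
qed

lemma T_bound: assumes "l \<in> T kk" shows "cum kk \<le> v l"
proof -
  have l: "l < n" "r l \<le> kk" using assms by auto
  then have "kk \<noteq> 0" using rank_range[OF l(1)] by auto
  then have "cum kk \<le> sv kk" using kk_props(2) by auto
  also have "\<dots> \<le> v l" using sv_ge[OF l] kk_props by auto
  finally show ?thesis .
qed

lemma out_le: assumes "j < n" "kk < r j" shows "v j \<le> sv (kk+1)"
  using sv_le[OF assms(1)] assms by auto

lemma sv_next_le: assumes "l \<in> T kk" shows "sv (kk+1) \<le> v l"
proof (cases "kk + 1 \<le> n")
  case True
  then show ?thesis using sv_ge[of l "kk+1"] assms by auto
next
  case False
  then show ?thesis using assms vpos by (auto simp: upa_sval_def intro: less_imp_le)
qed

lemma next_agent: assumes "kk < n"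
  shows "\<exists>g<n. r g = kk+1 \<and> sv (kk+1) = v g \<and> cum kk + B g > v g \<and> T (kk+1) = insert g (T kk) \<and> g \<notin> T kk"
proof -
  define g where "g = upa_agent n v (kk+1)"
  have g: "g < n" "r g = kk+1" using agent[of "kk+1"] assms g_def by auto
  have sv: "sv (kk+1) = v g" using sv_rank[OF g(1)] g by simp
  have Tins: "T (kk+1) = insert g (T kk)"
  proof (rule set_eqI)
    fix x
    show "x \<in> T (kk+1) \<longleftrightarrow> x \<in> insert g (T kk)"
    proof (cases "x < n")
      case True
      have "r x \<le> kk + 1 \<longleftrightarrow> r x \<le> kk \<or> r x = r g" using g by linarith
      also have "\<dots> \<longleftrightarrow> r x \<le> kk \<or> x = g" using rank_inj[OF True g(1)] by auto
      finally show ?thesis using True g by auto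
    qed (use g in auto)
  qed
  have gn: "g \<notin> T kk" using g by auto
  have "cum (kk+1) = cum kk + B g"
    unfolding cum_eq Tins using gn by (simp add: add.commute)
  moreover have "\<not> adm (kk+1)" using kk_props(3)[of "kk+1"] assms by auto
  ultimately have "cum kk + B g > v g" using sv by auto
  then show ?thesis using g sv Tins gn by blast
qed

lemma sv_over: "sv (n+1) = 0" by (simp add: upa_sval_def)

lemma price_pos: assumes "i \<in> T kk" shows "price > 0"
proof -
  have "B i \<le> cum kk" unfolding cum_eq using sumB_mono[of "{i}" "T kk"] assms by auto
  then show ?thesis using Bpos assms by fastforce
qed

lemma allocA: assumes "i < n" "r i \<le> kk" shows "upa_alloc n v B i = B i / price"
  using assms unfolding upa_alloc_def Let_def by (auto simp: max_def)

lemma allocB: assumes "i < n" "kk < r i" shows "upa_alloc n v B i = max 0 (1 - sum B (P i) / v i)"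
proof -
  have vi: "v i > 0" using vpos assms by auto
  have ri: "1 \<le> r i" "r i \<le> n" using rank_range[OF assms(1)] by auto
  show ?thesis
  proof (cases "r i = kk + 1")
    case True
    have w: "sv (kk+1) = v i" using sv_rank[OF assms(1)] True by simp
    have Tk: "T kk = P i" using T_rank(1)[OF assms(1)] True by simp
    have S: "cum kk = sum B (P i)" using Tk cum_eq by simp
    show ?thesis
    proof (cases "cum kk > sv (kk+1)")
      case True
      then have "sum B (P i) / v i > 1" using S w vi by simp
      then show ?thesis using True assms unfolding upa_alloc_def Let_def by auto
    next
      case False
      then have "sum B (P i) / v i \<le> 1" using S w vi by simp
      moreover have "(\<Sum>j\<in>T kk. B j / sv (kk+1)) = sum B (P i) / v i"
        using Tk w by (simp add: sum_divide_distrib)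
      ultimately show ?thesis using False assms \<open>r i = kk+1\<close> unfolding upa_alloc_def Let_def by auto
    qed
  next
    case False
    then have k1: "kk < r i - 1" using assms by auto
    then have "\<not> adm (r i - 1)" using kk_props(3)[of "r i - 1"] ri by (metis diff_le_self le_trans not_le)
    then have "cum (r i - 1) > sv (r i - 1)" by auto
    moreover have "sv (r i - 1) \<ge> v i" using sv_le[OF assms(1), of "r i - 1"] k1 by auto
    ultimately have "sum B (P i) > v i" using cum_rank(1)[OF assms(1)] by auto
    then have "sum B (P i) / v i > 1" using vi by simp
    then show ?thesis using False assms unfolding upa_alloc_def Let_def by auto
  qed
qed

end

lemma alg: fixes S a Bi p :: real
  assumes "0 \<le> S" "S < a" "a < S + Bi" "0 < p" "p \<le> S + Bi" "0 < Bi"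
  shows "1 - S / a \<le> Bi / p"
proof -
  have a0: "a > 0" using assms by linarith
  have "S * (a - S - Bi) \<le> 0" using assms by (intro mult_nonneg_nonpos) auto
  then have "(a - S) * (S + Bi) \<le> a * Bi" by (simp add: algebra_simps)
  then have "(a - S) / a \<le> Bi / (S + Bi)" using a0 assms by (simp add: field_simps)
  also have "\<dots> \<le> Bi / p" using assms by (intro divide_left_mono) auto
  finally show ?thesis using a0 by (simp add: diff_divide_distrib)
qed

theorem mainTheorem6:
  fixes n i :: nat and v B :: "nat \<Rightarrow> real" and a b :: real
  assumes "i < n"
    and "\<forall>j<n. v j > 0"
    and "\<forall>j<n. B j > 0"
    and "0 < a" and "a \<le> b"
  shows "upa_alloc n (v(i := a)) B i \<le> upa_alloc n (v(i := b)) B i"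
proof -
  interpret A: prof n "v(i:=a)" B using assms by unfold_locales auto
  interpret C: prof n "v(i:=b)" B using assms by unfold_locales auto
  have iN: "i < n" by fact
  have Bi: "B i > 0" using assms by auto
  have Psub: "C.P i \<subseteq> A.P i" using assms by auto
  have sPsub: "sum B (C.P i) \<le> sum B (A.P i)" by (rule C.sumB_mono[OF Psub]) auto
  have precAB: "A.prec l j \<longleftrightarrow> C.prec l j" if "l \<noteq> i" "j \<noteq> i" for l j using that by simp
  show ?thesis
  proof (cases "A.r i \<le> A.kk")
    case True
    have "A.cum (A.r i) \<le> a" using A.inT_iff[OF iN] True by simp
    moreover have "C.cum (C.r i) \<le> A.cum (A.r i)"
      using A.cum_rank(2)[OF iN] C.cum_rank(2)[OF iN] sPsub by simp
    ultimately have "C.cum (C.r i) \<le> b" using assms by linarith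
    then have Cin: "C.r i \<le> C.kk" using C.inT_iff[OF iN] by simp
    define Ta where "Ta = A.T A.kk"
    define Tb where "Tb = C.T C.kk"
    have iTa: "i \<in> Ta" using True iN Ta_def by auto
    have iTb: "i \<in> Tb" using Cin iN Tb_def by auto
    have pa: "A.price > 0" using A.price_pos iTa Ta_def by auto
    have pb: "C.price > 0" using C.price_pos iTb Tb_def by auto
    have fTb: "finite Tb" unfolding Tb_def by auto
    have le: "C.price \<le> A.price"
    proof (cases "Tb \<subseteq> Ta")
      case True
      have c1: "C.cum C.kk \<le> A.cum A.kk"
        unfolding C.cum_eq A.cum_eq using A.sumB_mono[OF True] Ta_def Tb_def by auto
      have c2: "C.sv (C.kk+1) \<le> A.price"
      proof (cases "C.kk < n")
        case True
        then obtain g where g: "g < n" "C.r g = C.kk+1" "C.sv (C.kk+1) = (v(i:=b)) g"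
          "C.cum C.kk + B g > (v(i:=b)) g" "g \<notin> Tb"
          using C.next_agent Tb_def by blast
        have gi: "g \<noteq> i" using g(5) iTb by auto
        show ?thesis
        proof (cases "g \<in> Ta")
          case True
          have "sum B (insert g Tb) \<le> sum B Ta"
            using A.sumB_mono[of "insert g Tb" Ta] True \<open>Tb \<subseteq> Ta\<close> Ta_def by auto
          moreover have "sum B (insert g Tb) = B g + C.cum C.kk"
            using fTb g(5) by (simp add: C.cum_eq Tb_def)
          ultimately show ?thesis using g A.cum_eq Ta_def by auto
        next
          case False
          then have "A.kk < A.r g" using g Ta_def by auto
          then have "(v(i:=a)) g \<le> A.sv (A.kk+1)" using A.out_le g by auto
          then show ?thesis using g gi by auto
        qed
      next
        case False
        then have "C.kk = n" using C.kk_props by linarith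
        then show ?thesis using C.sv_over pa by auto
      qed
      show ?thesis using c1 c2 by auto
    next
      case False
      then obtain j where j: "j \<in> Tb" "j \<notin> Ta" by auto
      have jn: "j < n" "A.kk < A.r j" "j \<noteq> i" using j Ta_def Tb_def iTa by auto
      have "A.kk < n" using jn A.rank_range[OF jn(1)] by linarith
      then obtain g where g: "g < n" "A.r g = A.kk+1" "A.sv (A.kk+1) = (v(i:=a)) g"
          "A.cum A.kk + B g > (v(i:=a)) g" "g \<notin> Ta"
          using A.next_agent Ta_def by blast
      have gi: "g \<noteq> i" using g(5) iTa by auto
      have sub: "insert g Ta \<subseteq> Tb"
      proof
        fix l assume l: "l \<in> insert g Ta"
        show "l \<in> Tb"
        proof (cases "l = i \<or> l = j")
          case False
          have ln: "l < n" using l g Ta_def by auto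
          have "A.r l < A.r j"
          proof (cases "l = g")
            case True
            have "A.r g \<noteq> A.r j" using A.rank_inj[OF g(1) jn(1)] False True by auto
            then show ?thesis using True g jn by auto
          next
            case False
            then show ?thesis using l jn Ta_def by auto
          qed
          then have "A.prec l j" using A.rank_less_iff[OF ln jn(1)] by simp
          then have "C.prec l j" using precAB[of l j] False jn(3) by auto
          then have "C.r l < C.r j" using C.rank_less[OF ln] by auto
          then show ?thesis using j ln Tb_def by auto
        qed (use iTb j in auto)
      qed
      have "A.cum A.kk + B g = sum B (insert g Ta)"
        using g(5) Ta_def by (simp add: A.cum_eq)
      also have "\<dots> \<le> sum B Tb" using C.sumB_mono[OF sub] Tb_def by auto
      also have "\<dots> \<le> (v(i:=b)) g" using C.T_bound[of g] sub Tb_def by (auto simp: C.cum_eq)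
      also have "\<dots> = (v(i:=a)) g" using gi by simp
      finally show ?thesis using g(4) by simp
    qed
    have "upa_alloc n (v(i := a)) B i = B i / A.price" using A.allocA[OF iN True] .
    also have "\<dots> \<le> B i / C.price" using pb le Bi by (intro divide_left_mono) auto
    also have "\<dots> = upa_alloc n (v(i := b)) B i" using C.allocA[OF iN Cin] by simp
    finally show ?thesis .
  next
    case False
    then have Aout: "A.kk < A.r i" by simp
    define Sa where "Sa = sum B (A.P i)"
    have xa: "upa_alloc n (v(i := a)) B i = max 0 (1 - Sa / a)"
      using A.allocB[OF iN Aout] Sa_def by simp
    have SaB: "Sa + B i > a" using A.inT_iff[OF iN] Aout A.cum_rank(2)[OF iN] Sa_def by auto
    have Sa0: "Sa \<ge> 0" unfolding Sa_def using assms by (intro sum_nonneg) (auto intro: less_imp_le)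
    show ?thesis
    proof (cases "Sa < a")
      case False
      then have "upa_alloc n (v(i := a)) B i = 0" using xa assms by auto
      moreover have "upa_alloc n (v(i := b)) B i \<ge> 0"
      proof (cases "C.r i \<le> C.kk")
        case True
        then have "C.price > 0" using C.price_pos iN by auto
        then show ?thesis using C.allocA[OF iN True] Bi by auto
      qed (use C.allocB[OF iN] in auto)
      ultimately show ?thesis by simp
    next
      case Sa: True
      show ?thesis
      proof (cases "C.kk < C.r i")
        case True
        define Sb where "Sb = sum B (C.P i)"
        have Sb0: "0 \<le> Sb" unfolding Sb_def using assms(3) by (intro sum_nonneg) (auto intro: less_imp_le)
        have Sb: "0 \<le> Sb" "Sb \<le> Sa" using Sb0 sPsub Sa_def Sb_def by auto
        have "Sb / b \<le> Sa / b" using Sb assms by (intro divide_right_mono) auto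
        also have "\<dots> \<le> Sa / a" using Sa0 assms by (intro divide_left_mono) auto
        finally have "1 - Sa / a \<le> 1 - Sb / b" by simp
        then show ?thesis using xa C.allocB[OF iN True] Sb_def by auto
      next
        case False
        then have Cin: "C.r i \<le> C.kk" by simp
        define Tb where "Tb = C.T C.kk"
        have iTb: "i \<in> Tb" using Cin iN Tb_def by auto
        have pb: "C.price > 0" using C.price_pos iTb Tb_def by auto
        have fTb: "finite Tb" unfolding Tb_def by auto
        have bound: "C.price \<le> Sa + B i"
        proof (cases "Tb \<subseteq> insert i (A.P i)")
          case True
          have Msum: "sum B (insert i (A.P i)) = Sa + B i" using Sa_def by (simp add: add.commute)
          have isub: "insert i (A.P i) \<subseteq> {j. j < n}" using iN by blast
          have s1: "sum B Tb \<le> sum B (insert i (A.P i))" using C.sumB_mono[OF True isub] .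
          have "C.cum C.kk = sum B Tb" by (simp add: C.cum_eq Tb_def)
          then have c1: "C.cum C.kk \<le> Sa + B i" using s1 Msum by linarith
          have c2: "C.sv (C.kk+1) \<le> Sa + B i"
          proof (cases "C.kk < n")
            case True
            then obtain g where g: "g < n" "C.r g = C.kk+1" "C.sv (C.kk+1) = (v(i:=b)) g"
              "C.cum C.kk + B g > (v(i:=b)) g" "g \<notin> Tb"
              using C.next_agent Tb_def by blast
            have gi: "g \<noteq> i" using g(5) iTb by auto
            show ?thesis
            proof (cases "A.prec g i")
              case True
              have "insert g Tb \<subseteq> insert i (A.P i)" using \<open>Tb \<subseteq> insert i (A.P i)\<close> True g(1) by blast
              then have "sum B (insert g Tb) \<le> sum B (insert i (A.P i))"
                using C.sumB_mono isub by blast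
              moreover have "sum B (insert g Tb) = B g + C.cum C.kk"
                using fTb g(5) by (simp add: C.cum_eq Tb_def)
              ultimately show ?thesis using g Msum by auto
            next
              case False
              then have "(v(i:=a)) g \<le> a" using gi by auto
              then show ?thesis using g gi SaB by auto
            qed
          next
            case False
            then have "C.kk = n" using C.kk_props by linarith
            then show ?thesis using C.sv_over Sa0 Bi by auto
          qed
          show ?thesis using c1 c2 by auto
        next
          case False
          then obtain j where j: "j \<in> Tb" "j \<notin> insert i (A.P i)" by auto
          have jn: "j < n" "j \<noteq> i" using j Tb_def by auto
          have "(v(i:=a)) j \<le> a" using j jn by auto
          then have vj: "(v(i:=b)) j \<le> a" using jn by auto
          have jT: "j \<in> C.T C.kk" using j Tb_def by blast
          have "C.cum C.kk \<le> (v(i:=b)) j" using C.T_bound[OF jT] .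
          moreover have "C.sv (C.kk+1) \<le> (v(i:=b)) j" using C.sv_next_le[OF jT] .
          ultimately show ?thesis using vj SaB by auto
        qed
        have "1 - Sa / a \<le> B i / C.price" by (rule alg[OF Sa0 Sa SaB pb bound Bi])
        moreover have "0 \<le> B i / C.price" using pb Bi by auto
        ultimately show ?thesis using xa C.allocA[OF iN Cin] by auto
      qed
    qed
  qed
qed

end
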